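(* Let $(A_1,X_1)$ and $(A_2,X_2)$ be two graphs (with $n_1$ and $n_2$ nodes) that cannot be distinguished by the 1-WL algorithm. Consider a DiffPool pooling layer with $c$ clusters, $S = \mathrm{gnn}_c(A,X)\in\mathbb{R}^{n\times c}$, $H=\mathrm{gnn}_r(A,X)$, where $\mathrm{gnn}_c$ and $\mathrm{gnn}_r$ are 1-WL-bounded GNNs, and whose outputs are the coarsened adjacency matrix $S^\top A S$ and the pooled features $S^\top H$ (the paper writes the layer output as $H' = S^\top A S\, S^\top H$). Then $S_1^\top A_1 S_1 = S_2^\top A_2 S_2$ and $S_1^\top H_1 = S_2^\top H_2$ (hence also $S_1^\top A_1 S_1 S_1^\top H_1 = S_2^\top A_2 S_2 S_2^\top H_2$). Consequently, any DiffPool network consisting of such pooling layers (with intermediate GNN layers) followed by a permutation-invariant readout computes the same vector representation for the two graphs.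
   Context: A graph with $n$ nodes is given by an adjacency matrix $A\in\{0,1\}^{n\times n}$ (symmetric) and node features $X\in\mathbb{R}^{n\times d}$. The 1-WL (color refinement) algorithm starts from initial colors given by node features and iteratively recolors each node by the pair (its current color, multiset of current colors of its neighbors) until the partition is stable. Two graphs "cannot be distinguished by the 1-WL algorithm" means: running 1-WL on their disjoint union, every stable color class contains the same number of nodes from each graph. A node-level map $f$, $(A,X)\mapsto f(A,X)\in\mathbb{R}^{n\times d'}$, is called 1-WL-bounded if the representation it assigns to a node depends only on the node's stable 1-WL color (computed on the disjoint union of any graphs under consideration); standard message-passing GNNs (e.g. GIN, GCN) are of this type, and row-wise functions such as a row-wise softmax of such outputs remain of this type. *)

theory Defs
  imports "HOL-Analysis.Analysis" "HOL-Library.Multiset"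
begin

text \<open>A graph with nodes 0,...,nv-1, adjacency relation (0/1 matrix A) and
  node features X (row i is a vector in R^d, the dimension d being the finite type 'd).\<close>
record 'd graph =
  nv   :: nat
  adj  :: "nat \<Rightarrow> nat \<Rightarrow> bool"
  feat :: "nat \<Rightarrow> real ^ 'd"

definition wf_graph :: "('d::finite) graph \<Rightarrow> bool" where
  "wf_graph G \<longleftrightarrow> (\<forall>i j. adj G i j = adj G j i)"

definition nbrs :: "('d::finite) graph \<Rightarrow> nat \<Rightarrow> nat set" where
  "nbrs G v = {u. u < nv G \<and> adj G v u}"

definition disj_union :: "('d::finite) graph \<Rightarrow> 'd graph \<Rightarrow> 'd graph" where
  "disj_union G H =
     \<lparr> nv = nv G + nv H,
       adj = (\<lambda>i j. (i < nv G \<and> j < nv G \<and> adj G i j) \<or>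
                     (nv G \<le> i \<and> nv G \<le> j \<and> adj H (i - nv G) (j - nv G))),
       feat = (\<lambda>i. if i < nv G then feat G i else feat H (i - nv G)) \<rparr>"

datatype 'f wlcol = Init 'f | Refine "'f wlcol" "'f wlcol multiset"

fun wl_color :: "('d::finite) graph \<Rightarrow> nat \<Rightarrow> nat \<Rightarrow> (real ^ 'd) wlcol" where
  "wl_color G 0 v = Init (feat G v)"
| "wl_color G (Suc t) v =
     Refine (wl_color G t v) (image_mset (wl_color G t) (mset_set (nbrs G v)))"

text \<open>Same stable 1-WL colour: the refinement sequence of partitions is monotone and
  stabilises, so the stable partition is the intersection of all rounds.\<close>
definition wl_equiv :: "('d::finite) graph \<Rightarrow> nat \<Rightarrow> nat \<Rightarrow> bool" where
  "wl_equiv G u v \<longleftrightarrow> (\<forall>t. wl_color G t u = wl_color G t v)"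

definition wl_indist :: "('d::finite) graph \<Rightarrow> 'd graph \<Rightarrow> bool" where
  "wl_indist G H \<longleftrightarrow>
     (let U = disj_union G H in
      \<forall>v < nv U. card {i. i < nv G \<and> wl_equiv U i v} =
                 card {i. nv G \<le> i \<and> i < nv G + nv H \<and> wl_equiv U i v})"

definition wl_bounded :: "(('d::finite) graph \<Rightarrow> nat \<Rightarrow> 'o) \<Rightarrow> bool" where
  "wl_bounded f \<longleftrightarrow>
     (\<forall>G H u v. wf_graph G \<longrightarrow> wf_graph H \<longrightarrow> u < nv G \<longrightarrow> v < nv H \<longrightarrow>
        wl_equiv (disj_union G H) u (nv G + v) \<longrightarrow> f G u = f H v)"

text \<open>S^T A S for S given row-wise (S i = row i, in R^c).\<close>
definition coarse_adj :: "('d::finite) graph \<Rightarrow> (nat \<Rightarrow> real ^ 'c) \<Rightarrow> real ^ 'c ^ 'c" where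
  "coarse_adj G S = (\<chi> p q. \<Sum>i<nv G. \<Sum>j<nv G.
       S i $ p * (if adj G i j then 1 else 0) * S j $ q)"

text \<open>S^T H for S, H given row-wise.\<close>
definition pooled_feat :: "('d::finite) graph \<Rightarrow> (nat \<Rightarrow> real ^ 'c) \<Rightarrow> (nat \<Rightarrow> real ^ 'h) \<Rightarrow> real ^ 'h ^ 'c" where
  "pooled_feat G S H = (\<chi> p k. \<Sum>i<nv G. S i $ p * H i $ k)"

end

theory Submission
  imports Defs
begin

lemma count_img_mset_set:
  "finite A \<Longrightarrow> count (image_mset f (mset_set A)) a = card {x\<in>A. f x = a}"
  by (smt (verit, ccfv_SIG) Collect_cong count_conv_size_mset
    filter_mset_image_mset filter_mset_mset_set size_image_mset size_mset_set)

lemma sum_eq_classes: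
  fixes F :: "nat \<Rightarrow> real"
  assumes fin: "finite A" "finite B"
    and resp: "\<forall>x\<in>A\<union>B. \<forall>y\<in>A\<union>B. k x = k y \<longrightarrow> F x = F y"
    and cnt: "\<forall>v\<in>A\<union>B. card {i\<in>A. k i = k v} = card {i\<in>B. k i = k v}"
  shows "sum F A = sum F B"
proof -
  define c where "c x = real (card {i\<in>A. k i = k x})" for x
  have cB: "c x = real (card {i\<in>B. k i = k x})" if "x \<in> A \<union> B" for x
    using cnt that by (simp add: c_def)
  have cpos: "c x \<noteq> 0" if "x \<in> A \<union> B" for x
  proof -
    have "x \<in> {i\<in>A. k i = k x} \<or> x \<in> {i\<in>B. k i = k x}" using that by auto
    moreover have "finite {i\<in>A. k i = k x}" "finite {i\<in>B. k i = k x}" using fin by auto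
    ultimately show ?thesis using cB[OF that] unfolding c_def
      by (metis card_0_eq empty_iff of_nat_eq_0_iff)
  qed
  have "sum F A = (\<Sum>i\<in>A. \<Sum>j\<in>B. if k j = k i then F j / c j else 0)"
  proof (rule sum.cong[OF refl])
    fix i assume iA: "i \<in> A"
    have "(\<Sum>j\<in>B. if k j = k i then F j / c j else 0) = (\<Sum>j\<in>{j\<in>B. k j = k i}. F i / c i)"
    proof -
      have "(\<Sum>j\<in>B. if k j = k i then F j / c j else 0) = (\<Sum>j\<in>{j\<in>B. k j = k i}. F j / c j)"
        using fin by (simp add: sum.inter_filter)
      also have "\<dots> = (\<Sum>j\<in>{j\<in>B. k j = k i}. F i / c i)"
      proof (rule sum.cong[OF refl])
        fix j assume "j \<in> {j\<in>B. k j = k i}"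
        hence jB: "j \<in> B" and kj: "k j = k i" by auto
        have "F j = F i" using resp jB iA kj by blast
        moreover have "c j = c i" unfolding c_def using kj by simp
        ultimately show "F j / c j = F i / c i" by simp
      qed
      finally show ?thesis .
    qed
    also have "\<dots> = c i * (F i / c i)" using cB[of i] iA by simp
    also have "\<dots> = F i" using cpos[of i] iA by simp
    finally show "F i = (\<Sum>j\<in>B. if k j = k i then F j / c j else 0)" by simp
  qed
  also have "\<dots> = (\<Sum>j\<in>B. \<Sum>i\<in>A. if k j = k i then F j / c j else 0)"
    by (rule sum.swap)
  also have "\<dots> = sum F B"
  proof (rule sum.cong[OF refl])
    fix j assume jB: "j \<in> B"
    have "(\<Sum>i\<in>A. if k j = k i then F j / c j else 0) = (\<Sum>i\<in>{i\<in>A. k i = k j}. F j / c j)"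
    proof -
      have "(\<Sum>i\<in>A. if k j = k i then F j / c j else 0) = (\<Sum>i\<in>A. if k i = k j then F j / c j else 0)"
        by (rule sum.cong) auto
      also have "\<dots> = (\<Sum>i\<in>{i\<in>A. k i = k j}. F j / c j)"
        using fin by (simp only: sum.inter_filter)
      finally show ?thesis .
    qed
    also have "\<dots> = c j * (F j / c j)" by (simp add: c_def)
    also have "\<dots> = F j" using cpos[of j] jB by simp
    finally show "(\<Sum>i\<in>A. if k j = k i then F j / c j else 0) = F j" .
  qed
  finally show ?thesis .
qed

lemma wl_color_mono:
  "wl_color G (t + m) x = wl_color G (t + m) y \<Longrightarrow> wl_color G t x = wl_color G t y"
  by (induction m) auto

lemma stab:
  fixes U :: "('d::finite) graph"
  shows "\<exists>T. \<forall>x<N. \<forall>y<N. wl_color U T x = wl_color U T y \<longrightarrow> wl_equiv U x y"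
proof -
  define P where "P = {(x,y). x < N \<and> y < N \<and> \<not> wl_equiv U x y}"
  have finP: "finite P" unfolding P_def
    by (rule finite_subset[of _ "{..<N} \<times> {..<N}"]) auto
  have "\<forall>p\<in>P. \<exists>t. wl_color U t (fst p) \<noteq> wl_color U t (snd p)"
    unfolding P_def wl_equiv_def by auto
  then obtain f where f: "\<forall>p\<in>P. wl_color U (f p) (fst p) \<noteq> wl_color U (f p) (snd p)"
    by metis
  define T where "T = Max (insert 0 (f ` P))"
  have "wl_color U T x \<noteq> wl_color U T y" if "x < N" "y < N" "\<not> wl_equiv U x y" for x y
  proof
    assume eq: "wl_color U T x = wl_color U T y"
    have pP: "(x,y) \<in> P" using that by (simp add: P_def)
    hence "f (x,y) \<le> T" unfolding T_def using finP by simp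
    then obtain m where "T = f (x,y) + m" using le_Suc_ex by blast
    hence "wl_color U (f (x,y)) x = wl_color U (f (x,y)) y" using eq wl_color_mono by metis
    thus False using f pP by auto
  qed
  thus ?thesis by blast
qed


lemma wl_equiv_sym: "wl_equiv G x y \<Longrightarrow> wl_equiv G y x"
  by (simp add: wl_equiv_def)
lemma wl_equiv_trans: "wl_equiv G x y \<Longrightarrow> wl_equiv G y z \<Longrightarrow> wl_equiv G x z"
  by (simp add: wl_equiv_def)

lemma nv_U[simp]: "nv (disj_union G1 G2) = nv G1 + nv G2"
  by (simp add: disj_union_def)

lemma cnt_U:
  assumes "wl_indist G1 G2" "v < nv G1 + nv G2"
  shows "card {i. i < nv G1 \<and> wl_equiv (disj_union G1 G2) i v}
       = card {i. nv G1 \<le> i \<and> i < nv G1 + nv G2 \<and> wl_equiv (disj_union G1 G2) i v}"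
  using assms unfolding wl_indist_def Let_def by simp

lemma witnesses:
  assumes "wl_indist G1 G2" "v < nv G1 + nv G2"
  shows "\<exists>a<nv G1. wl_equiv (disj_union G1 G2) a v"
    and "\<exists>b. nv G1 \<le> b \<and> b < nv G1 + nv G2 \<and> wl_equiv (disj_union G1 G2) b v"
proof -
  let ?U = "disj_union G1 G2"
  let ?SA = "{i. i < nv G1 \<and> wl_equiv ?U i v}"
  let ?SB = "{i. nv G1 \<le> i \<and> i < nv G1 + nv G2 \<and> wl_equiv ?U i v}"
  have fA: "finite ?SA" and fB: "finite ?SB" by auto
  have c: "card ?SA = card ?SB" using cnt_U[OF assms] .
  have "v \<in> ?SA \<or> v \<in> ?SB" using assms(2) by (auto simp: wl_equiv_def)
  hence "?SA \<noteq> {} \<or> ?SB \<noteq> {}" by blast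
  hence "card ?SA \<noteq> 0 \<or> card ?SB \<noteq> 0" using fA fB by simp
  hence "card ?SA \<noteq> 0" "card ?SB \<noteq> 0" using c by auto
  hence ne1: "?SA \<noteq> {}" and ne2: "?SB \<noteq> {}" by (metis card.empty)+
  from ne1 show "\<exists>a<nv G1. wl_equiv ?U a v" by blast
  from ne2 show "\<exists>b. nv G1 \<le> b \<and> b < nv G1 + nv G2 \<and> wl_equiv ?U b v" by blast
qed

lemma resp_lemma:
  assumes wf: "wf_graph G1" "wf_graph G2" and ind: "wl_indist G1 G2" and wb: "wl_bounded f"
    and x: "x < nv G1 + nv G2" and y: "y < nv G1 + nv G2"
    and e: "wl_equiv (disj_union G1 G2) x y"
  shows "(if x < nv G1 then f G1 x else f G2 (x - nv G1))
       = (if y < nv G1 then f G1 y else f G2 (y - nv G1))"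
proof -
  let ?U = "disj_union G1 G2"
  define g where "g z = (if z < nv G1 then f G1 z else f G2 (z - nv G1))" for z
  have cross: "g a = g b" if "a < nv G1" "nv G1 \<le> b" "b < nv G1 + nv G2" "wl_equiv ?U a b" for a b
  proof -
    have "nv G1 + (b - nv G1) = b" using that by simp
    hence "f G1 a = f G2 (b - nv G1)"
      using wb wf that unfolding wl_bounded_def by (metis add_less_cancel_left)
    thus ?thesis using that by (simp add: g_def)
  qed
  have key: "g a = g z" if ka: "a < nv G1" and kz: "z < nv G1 + nv G2" and ke: "wl_equiv ?U a z" for a z
  proof (cases "z < nv G1")
    case False thus ?thesis using cross ka kz ke by simp
  next
    case True
    obtain b where b: "nv G1 \<le> b" "b < nv G1 + nv G2" "wl_equiv ?U b z"
      using witnesses(2)[OF ind kz] by blast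
    have "wl_equiv ?U a b" using ke b(3) wl_equiv_trans wl_equiv_sym by metis
    hence "g a = g b" using cross ka b by simp
    moreover have "wl_equiv ?U z b" using b(3) wl_equiv_sym by metis
    hence "g z = g b" using cross True b by simp
    ultimately show ?thesis by simp
  qed
  obtain a where a: "a < nv G1" "wl_equiv ?U a x" using witnesses(1)[OF ind x] by blast
  have "g x = g a" using key a x by simp
  moreover have "g y = g a" using key a y e wl_equiv_trans by metis
  ultimately show ?thesis by (simp add: g_def)
qed

lemma row_sum:
  "(\<Sum>j<nv G. S i $ p * (if adj G i j then 1 else 0) * S j $ q)
   = S i $ p * (\<Sum>j\<in>nbrs G i. (S j $ q :: real))"
proof -
  have "(\<Sum>j<nv G. S i $ p * (if adj G i j then 1 else 0) * S j $ q)
      = S i $ p * (\<Sum>j<nv G. if adj G i j then S j $ q else 0)"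
  proof -
    have "(\<Sum>j<nv G. S i $ p * (if adj G i j then 1 else 0) * S j $ q)
        = (\<Sum>j<nv G. S i $ p * (if adj G i j then S j $ q else 0))"
      by (rule sum.cong) auto
    thus ?thesis by (simp add: sum_distrib_left)
  qed
  also have "(\<Sum>j<nv G. if adj G i j then S j $ q else 0) = (\<Sum>j\<in>nbrs G i. S j $ q)"
  proof -
    have "(\<Sum>j<nv G. if adj G i j then S j $ q else 0) = (\<Sum>j\<in>{j\<in>{..<nv G}. adj G i j}. S j $ q)"
      by (rule sum.inter_filter[symmetric]) simp
    moreover have "{j\<in>{..<nv G}. adj G i j} = nbrs G i" by (auto simp: nbrs_def)
    ultimately show ?thesis by simp
  qed
  finally show ?thesis .
qed

lemma nbrs_U1: "i < nv G1 \<Longrightarrow> nbrs (disj_union G1 G2) i = nbrs G1 i"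
  by (auto simp: nbrs_def disj_union_def)

lemma nbrs_U2: "nbrs (disj_union G1 G2) (nv G1 + v) = (\<lambda>j. nv G1 + j) ` nbrs G2 v"
proof (rule set_eqI, rule iffI)
  fix x assume "x \<in> nbrs (disj_union G1 G2) (nv G1 + v)"
  hence "nv G1 \<le> x" "x < nv G1 + nv G2" "adj G2 v (x - nv G1)"
    by (auto simp: nbrs_def disj_union_def)
  hence "x - nv G1 \<in> nbrs G2 v" "x = nv G1 + (x - nv G1)" by (auto simp: nbrs_def)
  thus "x \<in> (\<lambda>j. nv G1 + j) ` nbrs G2 v" by blast
next
  fix x assume "x \<in> (\<lambda>j. nv G1 + j) ` nbrs G2 v"
  thus "x \<in> nbrs (disj_union G1 G2) (nv G1 + v)"
    by (auto simp: nbrs_def disj_union_def)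
qed

lemma nbrs_fin: "nbrs G v \<subseteq> {..<nv G}" "finite (nbrs G v)"
  by (auto simp: nbrs_def)


theorem theorem1:
  fixes G1 G2 :: "('d::finite) graph"
    and gnn_c :: "('d::finite) graph \<Rightarrow> nat \<Rightarrow> real ^ 'c"
    and gnn_r :: "('d::finite) graph \<Rightarrow> nat \<Rightarrow> real ^ 'h"
  assumes "wf_graph G1" and "wf_graph G2"
    and "wl_indist G1 G2"
    and "wl_bounded gnn_c" and "wl_bounded gnn_r"
  shows "coarse_adj G1 (gnn_c G1) = coarse_adj G2 (gnn_c G2)
       \<and> pooled_feat G1 (gnn_c G1) (gnn_r G1) = pooled_feat G2 (gnn_c G2) (gnn_r G2)
       \<and> coarse_adj G1 (gnn_c G1) ** pooled_feat G1 (gnn_c G1) (gnn_r G1)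
         = coarse_adj G2 (gnn_c G2) ** pooled_feat G2 (gnn_c G2) (gnn_r G2)
       \<and> (\<forall>net :: real ^ 'c ^ 'c \<Rightarrow> real ^ 'h ^ 'c \<Rightarrow> 'r.
            net (coarse_adj G1 (gnn_c G1)) (pooled_feat G1 (gnn_c G1) (gnn_r G1))
          = net (coarse_adj G2 (gnn_c G2)) (pooled_feat G2 (gnn_c G2) (gnn_r G2)))"
proof -
  note wf = assms(1,2) and ind = assms(3)
  define U where "U = disj_union G1 G2"
  define n1 where "n1 = nv G1"
  define n2 where "n2 = nv G2"
  define N where "N = n1 + n2"
  define k where "k x = (\<lambda>t. wl_color U t x)" for x
  have keq: "k x = k y \<longleftrightarrow> wl_equiv U x y" for x y
    by (simp add: k_def wl_equiv_def fun_eq_iff)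
  define gS where "gS z = (if z < n1 then gnn_c G1 z else gnn_c G2 (z - n1))" for z
  define gH where "gH z = (if z < n1 then gnn_r G1 z else gnn_r G2 (z - n1))" for z
  have rS: "gS x = gS y" if "x < N" "y < N" "wl_equiv U x y" for x y
    using resp_lemma[OF wf ind assms(4)] that unfolding gS_def U_def N_def n1_def n2_def by blast
  have rH: "gH x = gH y" if "x < N" "y < N" "wl_equiv U x y" for x y
    using resp_lemma[OF wf ind assms(5)] that unfolding gH_def U_def N_def n1_def n2_def by blast
  define A where "A = {..<n1}"
  define B where "B = {n1..<N}"
  have AB: "A \<union> B = {..<N}" by (auto simp: A_def B_def N_def)
  have cntAB: "\<forall>v\<in>A\<union>B. card {i\<in>A. k i = k v} = card {i\<in>B. k i = k v}"
  proof
    fix v assume "v \<in> A \<union> B"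
    hence "v < nv G1 + nv G2" using AB by (simp add: N_def n1_def n2_def)
    from cnt_U[OF ind this] show "card {i\<in>A. k i = k v} = card {i\<in>B. k i = k v}"
      unfolding keq A_def B_def N_def n1_def n2_def U_def
      by (simp add: conj_assoc)
  qed
  have shiftB: "(\<Sum>i\<in>B. F i) = (\<Sum>v<n2. F (n1 + v))" for F :: "nat \<Rightarrow> real"
  proof -
    have "B = (\<lambda>v. n1 + v) ` {..<n2}" unfolding B_def N_def
    proof (rule set_eqI, rule iffI)
      fix x assume "x \<in> {n1..<n1 + n2}"
      hence "x - n1 \<in> {..<n2}" "x = n1 + (x - n1)" by auto
      thus "x \<in> (\<lambda>v. n1 + v) ` {..<n2}" by blast
    qed auto
    thus ?thesis by (simp add: sum.reindex)
  qed
  have transfer: "(\<Sum>i\<in>A. F i) = (\<Sum>v<n2. F (n1 + v))"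
    if resp: "\<And>x y. x < N \<Longrightarrow> y < N \<Longrightarrow> wl_equiv U x y \<Longrightarrow> F x = F y" for F :: "nat \<Rightarrow> real"
  proof -
    have "(\<Sum>i\<in>A. F i) = (\<Sum>i\<in>B. F i)"
    proof (rule sum_eq_classes[where k = k])
      show "finite A" "finite B" by (auto simp: A_def B_def)
      show "\<forall>x\<in>A\<union>B. \<forall>y\<in>A\<union>B. k x = k y \<longrightarrow> F x = F y"
        using resp AB keq by auto
      show "\<forall>v\<in>A\<union>B. card {i\<in>A. k i = k v} = card {i\<in>B. k i = k v}" by (rule cntAB)
    qed
    thus ?thesis using shiftB by simp
  qed
  obtain T where T: "\<forall>x<N. \<forall>y<N. wl_color U T x = wl_color U T y \<longrightarrow> wl_equiv U x y"
    using stab by blast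
  define inner where "inner q x = (\<Sum>j\<in>nbrs U x. gS j $ q)" for q x
  have nbU: "nbrs U x \<subseteq> {..<N}" "finite (nbrs U x)" for x
    using nbrs_fin[of U x] by (auto simp: U_def N_def n1_def n2_def)
  have rI: "inner q x = inner q y" if "x < N" "y < N" "wl_equiv U x y" for q x y
  proof -
    let ?col = "wl_color U T"
    have "wl_color U (Suc T) x = wl_color U (Suc T) y" using that(3) unfolding wl_equiv_def by blast
    hence ms: "image_mset ?col (mset_set (nbrs U x)) = image_mset ?col (mset_set (nbrs U y))" by simp
    show ?thesis unfolding inner_def
    proof (rule sum_eq_classes[where k = ?col])
      show "finite (nbrs U x)" "finite (nbrs U y)" using nbU by auto
      show "\<forall>a\<in>nbrs U x \<union> nbrs U y. \<forall>b\<in>nbrs U x \<union> nbrs U y. ?col a = ?col b \<longrightarrow> gS a $ q = gS b $ q"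
      proof (intro ballI impI)
        fix a b assume a: "a \<in> nbrs U x \<union> nbrs U y" and b: "b \<in> nbrs U x \<union> nbrs U y"
          and ab: "?col a = ?col b"
        have aN: "a < N" and bN: "b < N" using a b nbU by auto
        hence "wl_equiv U a b" using T ab by blast
        thus "gS a $ q = gS b $ q" using rS aN bN by simp
      qed
      show "\<forall>v\<in>nbrs U x \<union> nbrs U y. card {i\<in>nbrs U x. ?col i = ?col v} = card {i\<in>nbrs U y. ?col i = ?col v}"
      proof
        fix v
        have "card {i\<in>nbrs U x. ?col i = ?col v} = count (image_mset ?col (mset_set (nbrs U x))) (?col v)"
          by (rule count_img_mset_set[OF nbU(2)[of x], symmetric])
        also have "\<dots> = count (image_mset ?col (mset_set (nbrs U y))) (?col v)" using ms by simp
        also have "\<dots> = card {i\<in>nbrs U y. ?col i = ?col v}"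
          by (rule count_img_mset_set[OF nbU(2)[of y]])
        finally show "card {i\<in>nbrs U x. ?col i = ?col v} = card {i\<in>nbrs U y. ?col i = ?col v}" .
      qed
    qed
  qed
  have part1: "coarse_adj G1 (gnn_c G1) = coarse_adj G2 (gnn_c G2)"
  proof -
    have "coarse_adj G1 (gnn_c G1) $ p $ q = coarse_adj G2 (gnn_c G2) $ p $ q" for p q
    proof -
      define F where "F x = gS x $ p * inner q x" for x
      have "coarse_adj G1 (gnn_c G1) $ p $ q = (\<Sum>i\<in>A. F i)"
      proof -
        have "coarse_adj G1 (gnn_c G1) $ p $ q
            = (\<Sum>i<n1. gnn_c G1 i $ p * (\<Sum>j\<in>nbrs G1 i. gnn_c G1 j $ q))"
          by (simp add: coarse_adj_def row_sum n1_def)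
        also have "\<dots> = (\<Sum>i\<in>A. F i)" unfolding A_def
        proof (rule sum.cong[OF refl])
          fix i assume i: "i \<in> {..<n1}"
          have "inner q i = (\<Sum>j\<in>nbrs G1 i. gnn_c G1 j $ q)"
            unfolding inner_def U_def using i nbrs_U1[of i G1 G2] nbrs_fin[of G1 i]
            by (auto simp: n1_def gS_def intro!: sum.cong)
          thus "gnn_c G1 i $ p * (\<Sum>j\<in>nbrs G1 i. gnn_c G1 j $ q) = F i"
            using i by (simp add: F_def gS_def)
        qed
        finally show ?thesis .
      qed
      also have "\<dots> = (\<Sum>v<n2. F (n1 + v))"
        by (rule transfer) (simp add: F_def rS rI)
      also have "\<dots> = coarse_adj G2 (gnn_c G2) $ p $ q"
      proof -
        have "coarse_adj G2 (gnn_c G2) $ p $ q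
            = (\<Sum>v<n2. gnn_c G2 v $ p * (\<Sum>j\<in>nbrs G2 v. gnn_c G2 j $ q))"
          by (simp add: coarse_adj_def row_sum n2_def)
        also have "\<dots> = (\<Sum>v<n2. F (n1 + v))"
        proof (rule sum.cong[OF refl])
          fix v assume v: "v \<in> {..<n2}"
          have "inner q (n1 + v) = (\<Sum>j\<in>(\<lambda>j. n1 + j) ` nbrs G2 v. gS j $ q)"
            unfolding inner_def U_def n1_def by (simp add: nbrs_U2)
          also have "\<dots> = (\<Sum>j\<in>nbrs G2 v. gnn_c G2 j $ q)"
            by (simp add: sum.reindex gS_def)
          finally show "gnn_c G2 v $ p * (\<Sum>j\<in>nbrs G2 v. gnn_c G2 j $ q) = F (n1 + v)"
            by (simp add: F_def gS_def)
        qed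
        finally show ?thesis by simp
      qed
      finally show ?thesis .
    qed
    thus ?thesis by (simp add: vec_eq_iff)
  qed
  have part2: "pooled_feat G1 (gnn_c G1) (gnn_r G1) = pooled_feat G2 (gnn_c G2) (gnn_r G2)"
  proof -
    have "pooled_feat G1 (gnn_c G1) (gnn_r G1) $ p $ q = pooled_feat G2 (gnn_c G2) (gnn_r G2) $ p $ q" for p q
    proof -
      define F where "F x = gS x $ p * gH x $ q" for x
      have "pooled_feat G1 (gnn_c G1) (gnn_r G1) $ p $ q = (\<Sum>i\<in>A. F i)"
        by (simp add: pooled_feat_def A_def F_def gS_def gH_def n1_def)
      also have "\<dots> = (\<Sum>v<n2. F (n1 + v))"
        by (rule transfer) (simp add: F_def rS rH)
      also have "\<dots> = pooled_feat G2 (gnn_c G2) (gnn_r G2) $ p $ q"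
        by (simp add: pooled_feat_def F_def gS_def gH_def n2_def)
      finally show ?thesis .
    qed
    thus ?thesis by (simp add: vec_eq_iff)
  qed
  show ?thesis using part1 part2 by simp
qed

end
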